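(* Let $K\subseteq X_F$ be the subcomplex consisting of the edge joining $*$ to $T_{0,0}$ together with, for all integers $m,n\ge0$, the square with vertices $T_{m,n},T_{m+1,n},T_{m,n+1},T_{m+1,n+1}$; thus $K$ is identified with $\{(a,b)\in\mathbb R^2: a,b\ge0\}\cup I$, where $I$ is a unit segment meeting the quadrant only at $(0,0)=T_{0,0}$, with $T_{m,n}=(m,n)$. Then the inclusion $K\to X_F$ is an isometric embedding (with $K$ carrying its own length metric).
   Context: Let $\mathcal P=\langle x\mid x=x^2\rangle$. $X_F$ is the CAT(0) cubical complex whose vertices are reduced planar $(x,* )$-pictures over $\mathcal P$ (frame, $(x,x^2)$- and $(x^2,x)$-transistors and wires embedded in the plane, with no dipoles) and whose $n$-cubes are such pictures with $n$ maximal transistors marked white, the vertices of the cube being obtained by keeping or deleting each white transistor with its bottom wires; $*$ is the picture without transistors. Finite ordered rooted binary trees (pictures with only $(x,x^2)$-transistors, "carets") are vertices; label carets by binary strings (root empty; children of $s$ are $s0$ left, $s1$ right). $T_{m,n}$ is the tree with carets exactly at $\emptyset,0,00,\dots,0^m,1,11,\dots,1^n$ (a root caret with $m$ carets descending to the left and $n$ to the right). The square with vertices $T_{m,n},T_{m+1,n},T_{m,n+1},T_{m+1,n+1}$ is the cube given by $T_{m+1,n+1}$ with the carets $0^{m+1}$ and $1^{n+1}$ white. *)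

theory Defs
  imports Complex_Main
begin

text \<open>A reduced picture with top label x is, up to planar isotopy, a layer of
(x,x^2)-transistors (splits) forming a binary tree T, followed by a layer of
(x^2,x)-transistors (merges) forming an ordered forest E (one tree per bottom
wire, read upwards: leaves = middle wires, roots = bottom wires).  No dipoles
means that no split caret of T sits on the same two middle wires as a merge
caret of E (merge-then-split dipoles cannot occur in this normal form).\<close>

datatype tree = Leaf | Node tree tree

fun leaves :: "tree \<Rightarrow> nat" where
  "leaves Leaf = 1"
| "leaves (Node l r) = leaves l + leaves r"

text \<open>Index (of the left leaf) of all carets both of whose children are leaves;
k is the global index of the first leaf of the tree.\<close>
fun mcarets :: "nat \<Rightarrow> tree \<Rightarrow> nat set" where
  "mcarets k Leaf = {}"
| "mcarets k (Node l r) =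
     (if l = Leaf \<and> r = Leaf then {k} else mcarets k l \<union> mcarets (k + leaves l) r)"

type_synonym picture = "tree \<times> tree list"

definition mid :: "tree list \<Rightarrow> nat \<Rightarrow> nat" where
  "mid E j = sum_list (map leaves (take j E))"

definition reduced :: "picture \<Rightarrow> bool" where
  "reduced P = (case P of (T, E) \<Rightarrow>
     mcarets 0 T \<inter> (\<Union>j<length E. mcarets (mid E j) (E ! j)) = {})"

definition vertices :: "picture set" where
  "vertices = {(T, E). leaves T = sum_list (map leaves E) \<and> reduced (T, E)}"

text \<open>Maximal transistors, named by their bottom wires: a merge whose output is
bottom wire j, or a split whose two outputs are bottom wires j, j+1.\<close>
datatype mtrans = MMerge nat | MSplit nat

definition maxtr :: "picture \<Rightarrow> mtrans set" where
  "maxtr P = (case P of (T, E) \<Rightarrow>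
     {MMerge j | j. j < length E \<and> E ! j \<noteq> Leaf}
   \<union> {MSplit j | j. Suc j < length E \<and> E ! j = Leaf \<and> E ! Suc j = Leaf
                      \<and> mid E j \<in> mcarets 0 T})"

fun prune :: "nat set \<Rightarrow> nat \<Rightarrow> tree \<Rightarrow> tree" where
  "prune S k Leaf = Leaf"
| "prune S k (Node l r) =
     (if l = Leaf \<and> r = Leaf \<and> k \<in> S then Leaf
      else Node (prune S k l) (prune S (k + leaves l) r))"

text \<open>Delete a set D of maximal transistors, each together with its bottom wires.\<close>
definition del :: "picture \<Rightarrow> mtrans set \<Rightarrow> picture" where
  "del P D = (case P of (T, E) \<Rightarrow>
     (prune {mid E j | j. MSplit j \<in> D} 0 T,
      concat (map (\<lambda>j. if MMerge j \<in> D
                        then (case E ! j of Node a b \<Rightarrow> [a, b] | Leaf \<Rightarrow> [Leaf])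
                        else if 0 < j \<and> MSplit (j - 1) \<in> D then []
                        else [E ! j]) [0..<length E])))"

type_synonym cube = "picture \<times> mtrans set"

text \<open>Cubes of X_F: a reduced picture with a set of maximal transistors marked white.\<close>
definition XF_cubes :: "cube set" where
  "XF_cubes = {(P, W). P \<in> vertices \<and> W \<subseteq> maxtr P}"

text \<open>A point of a cube (P,W) with coordinates t (t w = 1: keep w, t w = 0: delete w)
is represented by its product weights on the vertices of the cube; this
representation automatically respects face identifications.\<close>

definition box :: "mtrans set \<Rightarrow> (mtrans \<Rightarrow> real) set" where
  "box W = {t. \<forall>w\<in>W. 0 \<le> t w \<and> t w \<le> 1}"

definition cweight :: "cube \<Rightarrow> (mtrans \<Rightarrow> real) \<Rightarrow> picture \<Rightarrow> real" where
  "cweight C t = (\<lambda>v. \<Sum>S\<in>Pow (snd C).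
      if v = del (fst C) (snd C - S)
      then (\<Prod>w\<in>S. t w) * (\<Prod>w\<in>snd C - S. 1 - t w) else 0)"

definition eucl :: "mtrans set \<Rightarrow> (mtrans \<Rightarrow> real) \<Rightarrow> (mtrans \<Rightarrow> real) \<Rightarrow> real" where
  "eucl W t s = sqrt (\<Sum>w\<in>W. (t w - s w)^2)"

definition pts :: "cube set \<Rightarrow> (picture \<Rightarrow> real) set" where
  "pts Cs = {cweight C t | C t. C \<in> Cs \<and> t \<in> box (snd C)}"

definition cmetric :: "cube set \<Rightarrow> (picture \<Rightarrow> real) \<Rightarrow> (picture \<Rightarrow> real) \<Rightarrow> real" where
  "cmetric Cs x y = Inf {(\<Sum>i<k. eucl (snd (C i)) (t i) (s i)) | k C t s p.
      p 0 = x \<and> p k = y \<and>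
      (\<forall>i<k. C i \<in> Cs \<and> t i \<in> box (snd (C i)) \<and> s i \<in> box (snd (C i)) \<and>
              p i = cweight (C i) (t i) \<and> p (Suc i) = cweight (C i) (s i))}"

fun combl :: "nat \<Rightarrow> tree" where
  "combl 0 = Leaf"
| "combl (Suc k) = Node (combl k) Leaf"

fun combr :: "nat \<Rightarrow> tree" where
  "combr 0 = Leaf"
| "combr (Suc k) = Node Leaf (combr k)"

definition Tmn :: "nat \<Rightarrow> nat \<Rightarrow> tree" where
  "Tmn m n = Node (combl m) (combr n)"

definition tree_pic :: "tree \<Rightarrow> picture" where
  "tree_pic T = (T, replicate (leaves T) Leaf)"

text \<open>The edge from * to T_{0,0} and, for all m n, the square given by
T_{m+1,n+1} with carets 0^{m+1} (bottom wires 0,1) and 1^{n+1}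
(bottom wires m+n+2, m+n+3) white.\<close>
definition K_cubes :: "cube set" where
  "K_cubes = {(tree_pic (Tmn 0 0), {MSplit 0})}
     \<union> {(tree_pic (Tmn (Suc m) (Suc n)), {MSplit 0, MSplit (m + n + 2)}) | m n. True}"

end

theory Submission
  imports Defs "HOL-Analysis.L2_Norm"
begin

fun lsp :: "tree \<Rightarrow> nat" where
  "lsp Leaf = 0" | "lsp (Node l r) = Suc (lsp l)"
fun rsp :: "tree \<Rightarrow> nat" where
  "rsp Leaf = 0" | "rsp (Node l r) = Suc (rsp r)"

lemma leaves_pos: "1 \<le> leaves T"
  by (induction T) auto

lemma mcarets_bound: "p \<in> mcarets k T \<Longrightarrow> k \<le> p \<and> p + 2 \<le> k + leaves T"
proof (induction k T arbitrary: p rule: mcarets.induct)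
  case (2 k l r)
  have a: "p \<in> mcarets k l \<Longrightarrow> k \<le> p \<and> p + 2 \<le> k + leaves l" for p
    using 2 by (cases "l = Leaf \<and> r = Leaf") auto
  have b: "p \<in> mcarets (k + leaves l) r \<Longrightarrow> k + leaves l \<le> p \<and> p + 2 \<le> k + leaves l + leaves r" for p
    using 2 by (cases "l = Leaf \<and> r = Leaf") auto
  show ?case using 2(3) leaves_pos[of l] leaves_pos[of r]
    by (auto split: if_splits dest!: a b)
qed simp

lemma prune_lsp: "lsp (prune S k T) = (if k \<in> S \<and> k \<in> mcarets k T then lsp T - 1 else lsp T)"
proof (induction S k T rule: prune.induct)
  case (2 S k l r)
  show ?case
  proof (cases "l = Leaf \<and> r = Leaf")
    case True then show ?thesis by auto
  next
    case False
    have "k \<notin> mcarets (k + leaves l) r" using mcarets_bound[of k "k + leaves l" r] leaves_pos[of l] by auto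
    moreover have "l = Leaf \<Longrightarrow> k \<notin> mcarets k l" by simp
    moreover have "l \<noteq> Leaf \<Longrightarrow> lsp l \<ge> 1" by (cases l) auto
    ultimately show ?thesis using False 2 by (cases "l = Leaf") auto
  qed
qed simp

lemma prune_rsp: "rsp (prune S k T) = (if k + leaves T - 2 \<in> S \<and> k + leaves T - 2 \<in> mcarets k T then rsp T - 1 else rsp T)"
proof (induction S k T rule: prune.induct)
  case (2 S k l r)
  show ?case
  proof (cases "l = Leaf \<and> r = Leaf")
    case True then show ?thesis by auto
  next
    case False
    have "k + (leaves l + leaves r) - 2 \<notin> mcarets k l" using mcarets_bound[of _ k l] leaves_pos[of r] by force
    moreover have "r = Leaf \<Longrightarrow> k + (leaves l + leaves r) - 2 \<notin> mcarets (k + leaves l) r" by simp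
    moreover have "r \<noteq> Leaf \<Longrightarrow> rsp r \<ge> 1" by (cases r) auto
    moreover have "k + leaves l + leaves r = k + (leaves l + leaves r)" by simp
    ultimately show ?thesis using False 2 by (cases "r = Leaf") (auto simp: add.assoc simp del: One_nat_def)
  qed
qed simp

lemma prune_Leaf: "prune S k T = Leaf \<Longrightarrow> T = Leaf \<or> T = Node Leaf Leaf"
  by (induction S k T rule: prune.induct) (auto split: if_splits)

lemma len_le_sum: "length xs \<le> sum_list (map leaves xs)"
proof (induction xs)
  case (Cons a xs)
  then show ?case using leaves_pos[of a] by simp
qed simp

lemma mid_ge: "j \<le> length E \<Longrightarrow> j \<le> mid E j"
  unfolding mid_def using len_le_sum[of "take j E"] by simp

lemma mid_Suc: "j < length E \<Longrightarrow> mid E (Suc j) = mid E j + leaves (E ! j)"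
  unfolding mid_def by (simp add: take_Suc_conv_app_nth)

lemma mid_total: "mid E j + sum_list (map leaves (drop j E)) = sum_list (map leaves E)"
  unfolding mid_def by (metis append_take_drop_id map_append sum_list_append)

lemma mid_0[simp]: "mid E 0 = 0" unfolding mid_def by simp

definition gT :: "real \<Rightarrow> real \<Rightarrow> real \<Rightarrow> tree \<Rightarrow> real" where
  "gT al be ga T = (if T = Leaf then - ga else al * (real (lsp T) - 1) + be * (real (rsp T) - 1))"

definition dl :: "real \<Rightarrow> real \<Rightarrow> real \<Rightarrow> picture \<Rightarrow> mtrans \<Rightarrow> real" where
  "dl al be ga P w = (case w of MMerge j \<Rightarrow> 0 | MSplit j \<Rightarrow>
     (if fst P = Node Leaf Leaf then ga
      else (if j = 0 then al else 0) + (if Suc (Suc j) = length (snd P) then be else 0)))"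

lemma maxtr_split: "MSplit j \<in> maxtr (T, E) \<Longrightarrow> Suc j < length E \<and> E ! j = Leaf \<and> E ! Suc j = Leaf \<and> mid E j \<in> mcarets 0 T"
  unfolding maxtr_def by auto

lemma maxtr_finite: "finite (maxtr P)"
proof -
  obtain T E where P: "P = (T, E)" by fastforce
  have "maxtr P \<subseteq> MMerge ` {..<length E} \<union> MSplit ` {..<length E}"
    unfolding P maxtr_def by auto
  then show ?thesis by (rule finite_subset) auto
qed

lemma leaves2: "leaves T = 2 \<Longrightarrow> T = Node Leaf Leaf"
proof (cases T)
  case (Node l r)
  assume "leaves T = 2"
  then have "leaves l = 1" "leaves r = 1" using Node leaves_pos[of l] leaves_pos[of r] by auto
  moreover have "leaves t = 1 \<Longrightarrow> t = Leaf" for t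
  proof (cases t)
    case (Node a b)
    assume "leaves t = 1" then show ?thesis using Node leaves_pos[of a] leaves_pos[of b] by simp
  qed simp
  ultimately show ?thesis using Node by auto
qed simp

lemma del_fst: "fst (del (T, E) D) = prune {mid E j | j. MSplit j \<in> D} 0 T"
  unfolding del_def by simp

lemma G:
  assumes P: "(T, E) \<in> vertices" and D: "D \<subseteq> maxtr (T, E)"
  shows "gT al be ga (fst (del (T, E) D)) = gT al be ga T - (\<Sum>w\<in>D. dl al be ga (T, E) w)"
proof -
  define SD where "SD = {mid E j | j. MSplit j \<in> D}"
  have lv: "leaves T = sum_list (map leaves E)" using P unfolding vertices_def by auto
  have F1: "MSplit j \<in> D \<Longrightarrow> Suc j < length E \<and> E ! j = Leaf \<and> E ! Suc j = Leaf \<and> mid E j \<in> mcarets 0 T" for j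
    using D maxtr_split by blast
  have fin: "finite D" using D maxtr_finite finite_subset by blast
  have A: "(0 \<in> SD \<and> 0 \<in> mcarets 0 T) \<longleftrightarrow> MSplit 0 \<in> D"
  proof
    assume "0 \<in> SD \<and> 0 \<in> mcarets 0 T"
    then obtain j where j: "0 = mid E j" "MSplit j \<in> D" unfolding SD_def by auto
    then have "j = 0" using mid_ge[of j E] F1[of j] by auto
    then show "MSplit 0 \<in> D" using j by simp
  next
    assume "MSplit 0 \<in> D"
    then show "0 \<in> SD \<and> 0 \<in> mcarets 0 T" using F1[of 0] unfolding SD_def by force
  qed
  have B: "(leaves T - 2 \<in> SD \<and> leaves T - 2 \<in> mcarets 0 T) \<longleftrightarrow> (2 \<le> length E \<and> MSplit (length E - 2) \<in> D)"
  proof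
    assume "leaves T - 2 \<in> SD \<and> leaves T - 2 \<in> mcarets 0 T"
    then obtain j where j: "leaves T - 2 = mid E j" "MSplit j \<in> D" unfolding SD_def by auto
    note f = F1[OF j(2)]
    have m2: "mid E (Suc (Suc j)) = mid E j + 2"
      using f mid_Suc[of j E] mid_Suc[of "Suc j" E] by simp
    have "mid E j + 2 \<le> leaves T" using mcarets_bound[of "mid E j" 0 T] f by simp
    then have "mid E (Suc (Suc j)) = leaves T" using m2 j(1) by simp
    then have "sum_list (map leaves (drop (Suc (Suc j)) E)) = 0" using mid_total[of E "Suc (Suc j)"] lv by simp
    then have "length (drop (Suc (Suc j)) E) = 0" using len_le_sum[of "drop (Suc (Suc j)) E"] by linarith
    moreover have "Suc j < length E" using f by simp
    ultimately have "j = length E - 2" by simp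
    then show "2 \<le> length E \<and> MSplit (length E - 2) \<in> D" using j f by auto
  next
    assume a: "2 \<le> length E \<and> MSplit (length E - 2) \<in> D"
    define j where "j = length E - 2"
    note f = F1[of j]
    have m2: "mid E (Suc (Suc j)) = mid E j + 2"
      using f a mid_Suc[of j E] mid_Suc[of "Suc j" E] j_def by simp
    have "mid E (Suc (Suc j)) = leaves T" using mid_total[of E "Suc (Suc j)"] lv a j_def by simp
    then have "mid E j = leaves T - 2" using m2 by simp
    then show "leaves T - 2 \<in> SD \<and> leaves T - 2 \<in> mcarets 0 T"
      using a f unfolding SD_def j_def by force
  qed
  have fst_del: "fst (del (T, E) D) = prune SD 0 T" unfolding SD_def by (rule del_fst)
  show ?thesis
  proof (cases "T = Leaf")
    case True
    then have "\<forall>w\<in>D. dl al be ga (T, E) w = 0" using F1 by (auto simp: dl_def split: mtrans.splits)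
    then show ?thesis using True fst_del by simp
  next
    case nL: False
    show ?thesis
    proof (cases "T = Node Leaf Leaf")
      case True
      have "MSplit j \<in> D \<Longrightarrow> j = 0" for j using F1[of j] mid_ge[of j E] True by auto
      then have "(\<Sum>w\<in>D. dl al be ga (T, E) w) = (\<Sum>w\<in>D. if w = MSplit 0 then ga else 0)"
        by (intro sum.cong) (auto simp: dl_def True split: mtrans.splits)
      also have "\<dots> = (if MSplit 0 \<in> D then ga else 0)" using fin by (simp add: sum.delta)
      finally have s: "(\<Sum>w\<in>D. dl al be ga (T, E) w) = (if MSplit 0 \<in> D then ga else 0)" .
      have "prune SD 0 T = (if 0 \<in> SD then Leaf else T)" using True by simp
      moreover have "0 \<in> mcarets 0 T" using True by simp
      ultimately show ?thesis using A s fst_del True by (simp add: gT_def)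
    next
      case nN: False
      have "(\<Sum>w\<in>D. dl al be ga (T, E) w) = (\<Sum>w\<in>D. (if w = MSplit 0 then al else 0) +
               (if w = MSplit (length E - 2) then (if 2 \<le> length E then be else 0) else 0))"
        by (intro sum.cong) (auto simp: dl_def nN split: mtrans.splits)
      also have "\<dots> = (if MSplit 0 \<in> D then al else 0) + (if 2 \<le> length E \<and> MSplit (length E - 2) \<in> D then be else 0)"
        using fin by (simp add: sum.distrib sum.delta)
      finally have s: "(\<Sum>w\<in>D. dl al be ga (T, E) w) = (if MSplit 0 \<in> D then al else 0) + (if 2 \<le> length E \<and> MSplit (length E - 2) \<in> D then be else 0)" .
      have pl: "prune SD 0 T \<noteq> Leaf" using prune_Leaf nL nN by blast
      have l1: "lsp T \<ge> 1" "rsp T \<ge> 1" using nL by (cases T, auto)+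
      have "lsp (prune SD 0 T) = (if MSplit 0 \<in> D then lsp T - 1 else lsp T)"
        using prune_lsp[of SD 0 T] A by simp
      moreover have "rsp (prune SD 0 T) = (if 2 \<le> length E \<and> MSplit (length E - 2) \<in> D then rsp T - 1 else rsp T)"
        using prune_rsp[of SD 0 T] B by simp
      ultimately show ?thesis using s fst_del pl nL l1 by (simp add: gT_def of_nat_diff algebra_simps)
    qed
  qed
qed

definition wt :: "mtrans set \<Rightarrow> (mtrans \<Rightarrow> real) \<Rightarrow> mtrans set \<Rightarrow> real" where
  "wt W t S = (\<Prod>w\<in>S. t w) * (\<Prod>w\<in>W - S. 1 - t w)"

lemma pow1: "finite W \<Longrightarrow> (\<Sum>S\<in>Pow W. wt W t S) = 1"
  using prod_add[of W t "\<lambda>w. 1 - t w"] unfolding wt_def by simp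

lemma pow2:
  assumes "finite W" "a \<in> W"
  shows "(\<Sum>S\<in>Pow W. if a \<notin> S then wt W t S else 0) = 1 - t a"
proof -
  define f where "f = t(a := 0)"
  have "(\<Prod>w\<in>W. f w + (1 - t w)) = (\<Sum>S\<in>Pow W. (\<Prod>w\<in>S. f w) * (\<Prod>w\<in>W - S. 1 - t w))"
    using prod_add[of W f "\<lambda>w. 1 - t w"] assms by simp
  moreover have "(\<Prod>w\<in>W. f w + (1 - t w)) = 1 - t a"
  proof -
    have "(\<Prod>w\<in>W. f w + (1 - t w)) = (f a + (1 - t a)) * (\<Prod>w\<in>W - {a}. f w + (1 - t w))"
      using assms by (simp add: prod.remove)
    also have "(\<Prod>w\<in>W - {a}. f w + (1 - t w)) = 1" by (intro prod.neutral) (auto simp: f_def)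
    finally show ?thesis by (simp add: f_def)
  qed
  moreover have "(\<Prod>w\<in>S. f w) = (if a \<in> S then 0 else \<Prod>w\<in>S. t w)" if "S \<in> Pow W" for S
  proof (cases "a \<in> S")
    case True
    then show ?thesis using that assms finite_subset[of S W] by (auto simp: f_def prod_zero_iff)
  next
    case False
    then show ?thesis by (auto simp: f_def intro!: prod.cong)
  qed
  ultimately show ?thesis unfolding wt_def by (auto intro!: sum.cong)
qed

lemma supp_sum:
  fixes c :: "'i \<Rightarrow> real" and h :: "'v \<Rightarrow> real"
  assumes fin: "finite I"
  shows "(\<Sum>v\<in>{v. (\<Sum>i\<in>I. if v = \<phi> i then c i else 0) \<noteq> 0}. (\<Sum>i\<in>I. if v = \<phi> i then c i else 0) * h v)
     = (\<Sum>i\<in>I. c i * h (\<phi> i))"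
proof -
  define x where "x v = (\<Sum>i\<in>I. if v = \<phi> i then c i else 0)" for v
  have z: "x v = 0" if "v \<notin> \<phi> ` I" for v
    unfolding x_def using that by (intro sum.neutral) auto
  have sub: "{v. x v \<noteq> 0} \<subseteq> \<phi> ` I" using z by blast
  have "(\<Sum>v\<in>{v. x v \<noteq> 0}. x v * h v) = (\<Sum>v\<in>\<phi> ` I. x v * h v)"
    using sub fin by (intro sum.mono_neutral_left) auto
  also have "\<dots> = (\<Sum>v\<in>\<phi> ` I. \<Sum>i\<in>I. if v = \<phi> i then c i * h (\<phi> i) else 0)"
  proof (rule sum.cong[OF refl])
    fix v
    have "x v * h v = (\<Sum>i\<in>I. (if v = \<phi> i then c i else 0) * h v)"
      unfolding x_def by (rule sum_distrib_right)
    also have "\<dots> = (\<Sum>i\<in>I. if v = \<phi> i then c i * h (\<phi> i) else 0)"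
      by (rule sum.cong) auto
    finally show "x v * h v = (\<Sum>i\<in>I. if v = \<phi> i then c i * h (\<phi> i) else 0)" .
  qed
  also have "\<dots> = (\<Sum>i\<in>I. \<Sum>v\<in>\<phi> ` I. if v = \<phi> i then c i * h (\<phi> i) else 0)"
    by (rule sum.swap)
  also have "\<dots> = (\<Sum>i\<in>I. c i * h (\<phi> i))"
  proof (rule sum.cong[OF refl])
    fix i assume "i \<in> I"
    then show "(\<Sum>v\<in>\<phi> ` I. if v = \<phi> i then c i * h (\<phi> i) else 0) = c i * h (\<phi> i)"
      using fin by (simp add: sum.delta')
  qed
  finally show ?thesis unfolding x_def .
qed

definition FF :: "real \<Rightarrow> real \<Rightarrow> real \<Rightarrow> (picture \<Rightarrow> real) \<Rightarrow> real" where
  "FF al be ga x = (\<Sum>v\<in>{v. x v \<noteq> 0}. x v * gT al be ga (fst v))"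

lemma cweight_alt: "cweight (P, W) t = (\<lambda>v. \<Sum>S\<in>Pow W. if v = del P (W - S) then wt W t S else 0)"
  unfolding cweight_def wt_def snd_conv fst_conv by (rule refl)

lemma FF_cube:
  assumes C: "(P, W) \<in> XF_cubes"
  shows "FF al be ga (cweight (P, W) t) = gT al be ga (fst P) - (\<Sum>w\<in>W. dl al be ga P w * (1 - t w))"
proof -
  obtain T E where PE: "P = (T, E)" by fastforce
  have V: "(T, E) \<in> vertices" and Wm: "W \<subseteq> maxtr (T, E)" using C PE unfolding XF_cubes_def by auto
  have fin: "finite W" using Wm maxtr_finite finite_subset by blast
  let ?d = "dl al be ga P"
  have "FF al be ga (cweight (P, W) t) = (\<Sum>S\<in>Pow W. wt W t S * gT al be ga (fst (del P (W - S))))"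
    unfolding FF_def cweight_alt using supp_sum[of "Pow W" "\<lambda>S. del P (W - S)" "wt W t" "\<lambda>v. gT al be ga (fst v)"] fin
    by simp
  also have "\<dots> = (\<Sum>S\<in>Pow W. wt W t S * (gT al be ga T - (\<Sum>w\<in>W. if w \<notin> S then ?d w else 0)))"
  proof (intro sum.cong refl)
    fix S assume "S \<in> Pow W"
    have "gT al be ga (fst (del P (W - S))) = gT al be ga T - (\<Sum>w\<in>W - S. ?d w)"
      using G[OF V, of "W - S" al be ga] Wm PE by auto
    also have "(\<Sum>w\<in>W - S. ?d w) = (\<Sum>w\<in>W. if w \<notin> S then ?d w else 0)"
      using fin by (simp add: sum.If_cases Diff_eq Compl_eq)
    finally show "wt W t S * gT al be ga (fst (del P (W - S))) = wt W t S * (gT al be ga T - (\<Sum>w\<in>W. if w \<notin> S then ?d w else 0))" by simp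
  qed
  also have "\<dots> = gT al be ga T * (\<Sum>S\<in>Pow W. wt W t S) - (\<Sum>S\<in>Pow W. \<Sum>w\<in>W. if w \<notin> S then wt W t S * ?d w else 0)"
    by (simp add: algebra_simps sum_subtractf sum_distrib_left sum_distrib_right if_distrib cong: if_cong)
  also have "(\<Sum>S\<in>Pow W. \<Sum>w\<in>W. if w \<notin> S then wt W t S * ?d w else 0) = (\<Sum>w\<in>W. \<Sum>S\<in>Pow W. if w \<notin> S then wt W t S * ?d w else 0)"
    by (rule sum.swap)
  also have "\<dots> = (\<Sum>w\<in>W. ?d w * (1 - t w))"
  proof (intro sum.cong refl)
    fix w assume w: "w \<in> W"
    have "(\<Sum>S\<in>Pow W. if w \<notin> S then wt W t S * ?d w else 0) = (\<Sum>S\<in>Pow W. if w \<notin> S then wt W t S else 0) * ?d w"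
      by (subst sum_distrib_right) (rule sum.cong, auto)
    then show "(\<Sum>S\<in>Pow W. if w \<notin> S then wt W t S * ?d w else 0) = ?d w * (1 - t w)"
      using pow2[OF fin w, of t] by simp
  qed
  finally show ?thesis using pow1[OF fin, of t] PE by simp
qed


lemma dl_sq:
  assumes V: "(T, E) \<in> vertices" and Wm: "W \<subseteq> maxtr (T, E)"
    and ab: "al^2 + be^2 \<le> 1" and g: "ga^2 \<le> 1"
  shows "(\<Sum>w\<in>W. (dl al be ga (T, E) w)^2) \<le> 1"
proof -
  have fin: "finite W" using Wm maxtr_finite finite_subset by blast
  have lv: "leaves T = sum_list (map leaves E)" using V unfolding vertices_def by auto
  have F1: "MSplit j \<in> W \<Longrightarrow> Suc j < length E \<and> E ! j = Leaf \<and> E ! Suc j = Leaf \<and> mid E j \<in> mcarets 0 T" for j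
    using Wm maxtr_split by blast
  show ?thesis
  proof (cases "T = Node Leaf Leaf")
    case True
    have "MSplit j \<in> W \<Longrightarrow> j = 0" for j using F1[of j] mid_ge[of j E] True by auto
    then have "(\<Sum>w\<in>W. (dl al be ga (T, E) w)^2) = (\<Sum>w\<in>W. if w = MSplit 0 then ga^2 else 0)"
      by (intro sum.cong) (auto simp: dl_def True split: mtrans.splits)
    also have "\<dots> \<le> 1" using fin g by (simp add: sum.delta)
    finally show ?thesis .
  next
    case nN: False
    have no: "\<not> (MSplit 0 \<in> W \<and> length E = 2)"
    proof
      assume a: "MSplit 0 \<in> W \<and> length E = 2"
      note f = F1[of 0]
      have "mid E 2 = 2" using a f mid_Suc[of 0 E] mid_Suc[of 1 E] by (simp add: numeral_2_eq_2)
      moreover have "mid E 2 = leaves T" using mid_total[of E 2] lv a by simp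
      ultimately show False using leaves2 nN by simp
    qed
    have "(\<Sum>w\<in>W. (dl al be ga (T, E) w)^2) = (\<Sum>w\<in>W. (if w = MSplit 0 then al^2 else 0) +
               (if w = MSplit (length E - 2) then (if 2 \<le> length E then be^2 else 0) else 0))"
    proof (intro sum.cong refl)
      fix w assume w: "w \<in> W"
      show "(dl al be ga (T, E) w)^2 = (if w = MSplit 0 then al^2 else 0) +
               (if w = MSplit (length E - 2) then (if 2 \<le> length E then be^2 else 0) else 0)"
      proof (cases w)
        case (MSplit j)
        then show ?thesis using no w by (cases "j = 0") (auto simp: dl_def nN)
      qed (simp add: dl_def)
    qed
    also have "\<dots> = (if MSplit 0 \<in> W then al^2 else 0) + (if 2 \<le> length E \<and> MSplit (length E - 2) \<in> W then be^2 else 0)"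
      using fin by (simp add: sum.distrib sum.delta)
    also have "\<dots> \<le> al^2 + be^2" by auto
    finally show ?thesis using ab by linarith
  qed
qed

lemma step_lip:
  assumes C: "(P, W) \<in> XF_cubes" and ab: "al^2 + be^2 \<le> 1" and g: "ga^2 \<le> 1"
  shows "FF al be ga (cweight (P, W) s) - FF al be ga (cweight (P, W) t) \<le> eucl W t s"
proof -
  obtain T E where PE: "P = (T, E)" by fastforce
  have V: "(T, E) \<in> vertices" and Wm: "W \<subseteq> maxtr (T, E)" using C PE unfolding XF_cubes_def by auto
  let ?d = "dl al be ga P"
  have "FF al be ga (cweight (P, W) s) - FF al be ga (cweight (P, W) t) = (\<Sum>w\<in>W. ?d w * (s w - t w))"
  proof -
    have "(\<Sum>w\<in>W. ?d w * (1 - t w)) - (\<Sum>w\<in>W. ?d w * (1 - s w)) = (\<Sum>w\<in>W. ?d w * (s w - t w))"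
      by (subst sum_subtractf[symmetric]) (rule sum.cong, auto simp: algebra_simps)
    then show ?thesis using FF_cube[OF C, of al be ga s] FF_cube[OF C, of al be ga t] by simp
  qed
  also have "\<dots> \<le> (\<Sum>w\<in>W. \<bar>?d w\<bar> * \<bar>t w - s w\<bar>)"
    by (intro sum_mono) (auto simp: abs_mult[symmetric] abs_minus_commute)
  also have "\<dots> \<le> L2_set ?d W * L2_set (\<lambda>w. t w - s w) W" by (rule L2_set_mult_ineq)
  also have "\<dots> \<le> 1 * L2_set (\<lambda>w. t w - s w) W"
  proof (rule mult_right_mono)
    have "(\<Sum>w\<in>W. (?d w)^2) \<le> 1" using dl_sq[OF V Wm ab g] PE by simp
    then show "L2_set ?d W \<le> 1" unfolding L2_set_def by simp
  qed (rule L2_set_nonneg)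
  also have "\<dots> = eucl W t s" unfolding eucl_def L2_set_def by simp
  finally show ?thesis .
qed

definition ispath :: "cube set \<Rightarrow> (picture \<Rightarrow> real) \<Rightarrow> (picture \<Rightarrow> real) \<Rightarrow> real \<Rightarrow> bool" where
  "ispath Cs x y L \<longleftrightarrow> (\<exists>k C t s p. p 0 = x \<and> p k = y \<and>
      (\<forall>i<k. C i \<in> Cs \<and> t i \<in> box (snd (C i)) \<and> s i \<in> box (snd (C i)) \<and>
              p i = cweight (C i) (t i) \<and> p (Suc i) = cweight (C i) (s i)) \<and>
      L = (\<Sum>i<k. eucl (snd (C i)) (t i) (s i)))"

lemma cmetric_alt: "cmetric Cs x y = Inf {L. ispath Cs x y L}"
  unfolding cmetric_def ispath_def by (rule arg_cong[where f = Inf]) blast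

lemma path_bound:
  assumes "ispath XF_cubes x y L" and ab: "al^2 + be^2 \<le> 1" and g: "ga^2 \<le> 1"
  shows "FF al be ga y - FF al be ga x \<le> L"
proof -
  obtain k C t s p where p0: "p 0 = x" and pk: "p k = y" and
    st: "\<forall>i<k. C i \<in> XF_cubes \<and> t i \<in> box (snd (C i)) \<and> s i \<in> box (snd (C i)) \<and>
              p i = cweight (C i) (t i) \<and> p (Suc i) = cweight (C i) (s i)"
    and L: "L = (\<Sum>i<k. eucl (snd (C i)) (t i) (s i))"
    using assms(1) unfolding ispath_def by blast
  have "FF al be ga y - FF al be ga x = (\<Sum>i<k. FF al be ga (p (Suc i)) - FF al be ga (p i))"
    using p0 pk sum_lessThan_telescope[of "\<lambda>i. FF al be ga (p i)" k] by simp
  also have "\<dots> \<le> L" unfolding L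
  proof (rule sum_mono)
    fix i assume "i \<in> {..<k}"
    then have h: "C i \<in> XF_cubes" "p i = cweight (C i) (t i)" "p (Suc i) = cweight (C i) (s i)" using st by auto
    obtain P W where "C i = (P, W)" by fastforce
    then show "FF al be ga (p (Suc i)) - FF al be ga (p i) \<le> eucl (snd (C i)) (t i) (s i)"
      using step_lip[of P W al be ga "s i" "t i"] h ab g by simp
  qed
  finally show ?thesis .
qed

lemma eucl_nonneg: "0 \<le> eucl W t s" unfolding eucl_def by (simp add: sum_nonneg)

lemma ispath_nonneg: "ispath Cs x y L \<Longrightarrow> 0 \<le> L"
  unfolding ispath_def by (auto intro!: sum_nonneg eucl_nonneg)

lemma cmetric_lower:
  assumes ne: "ispath XF_cubes x y L0" and ab: "al^2 + be^2 \<le> 1" and g: "ga^2 \<le> 1"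
  shows "FF al be ga y - FF al be ga x \<le> cmetric XF_cubes x y"
  unfolding cmetric_alt using ne path_bound[OF _ ab g]
  by (intro cInf_greatest) auto


lemma leaves_combl[simp]: "leaves (combl m) = Suc m" by (induction m) auto
lemma leaves_combr[simp]: "leaves (combr m) = Suc m" by (induction m) auto
lemma lsp_combl[simp]: "lsp (combl m) = m" by (induction m) auto
lemma rsp_combr[simp]: "rsp (combr m) = m" by (induction m) auto
lemma lsp_Tmn[simp]: "lsp (Tmn m n) = Suc m" unfolding Tmn_def by simp
lemma rsp_Tmn[simp]: "rsp (Tmn m n) = Suc n" unfolding Tmn_def by simp
lemma leaves_Tmn[simp]: "leaves (Tmn m n) = m + n + 2" unfolding Tmn_def by simp
lemma Tmn_ne_Leaf[simp]: "Tmn m n \<noteq> Leaf" unfolding Tmn_def by simp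

lemma Tmn_inj: "Tmn m n = Tmn m' n' \<longleftrightarrow> m = m' \<and> n = n'"
  by (metis lsp_Tmn rsp_Tmn nat.inject)

lemma tree_pic_inj: "tree_pic (Tmn m n) = tree_pic (Tmn m' n') \<longleftrightarrow> m = m' \<and> n = n'"
  unfolding tree_pic_def using Tmn_inj by auto

lemma mcarets_combl: "mcarets k (combl (Suc m)) = {k}"
  by (induction m arbitrary: k) auto
lemma mcarets_combr: "mcarets k (combr (Suc n)) = {k + n}"
  by (induction n arbitrary: k) auto

lemma prune_combl: "prune S k (combl (Suc m)) = (if k \<in> S then combl m else combl (Suc m))"
  by (induction m arbitrary: k) auto
lemma prune_combr: "prune S k (combr (Suc n)) = (if k + n \<in> S then combr n else combr (Suc n))"
  by (induction n arbitrary: k) (auto simp: add.assoc)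

lemma prune_empty: "prune {} k T = T"
  by (induction "{}::nat set" k T rule: prune.induct) auto

lemma prune_Tmn: "prune S 0 (Tmn (Suc m) (Suc n)) =
   Tmn (if 0 \<in> S then m else Suc m) (if m + n + 2 \<in> S then n else Suc n)"
proof -
  have ne: "combl (Suc m) \<noteq> Leaf" by simp
  have "prune S 0 (Node (combl (Suc m)) (combr (Suc n))) = Node (prune S 0 (combl (Suc m))) (prune S (leaves (combl (Suc m))) (combr (Suc n)))"
    using ne by (subst prune.simps) simp
  also have "\<dots> = Node (if 0 \<in> S then combl m else combl (Suc m)) (if m + n + 2 \<in> S then combr n else combr (Suc n))"
    by (simp only: prune_combl prune_combr leaves_combl) (simp add: algebra_simps)
  finally show ?thesis unfolding Tmn_def by simp
qed

lemma mid_rep: "j \<le> N \<Longrightarrow> mid (replicate N Leaf) j = j"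
  unfolding mid_def by (simp add: sum_list_replicate)

lemma concat_if: "concat (map (\<lambda>j. if Q j then [] else [x]) xs) = replicate (length (filter (\<lambda>j. \<not> Q j) xs)) x"
  by (induction xs) auto

lemma del_rep:
  assumes fin: "finite J" and J: "\<forall>j\<in>J. Suc j < N"
  shows "del (T, replicate N Leaf) (MSplit ` J) = (prune J 0 T, replicate (N - card J) Leaf)"
proof -
  have S: "{mid (replicate N Leaf) j | j. MSplit j \<in> MSplit ` J} = J"
  proof -
    have "{mid (replicate N Leaf) j | j. MSplit j \<in> MSplit ` J} = {j | j. j \<in> J}"
      using J mid_rep[of _ N] by (auto simp: image_iff) (metis Suc_lessD less_or_eq_imp_le)
    then show ?thesis by simp
  qed
  have "concat (map (\<lambda>j. if MMerge j \<in> MSplit ` J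
                        then (case replicate N Leaf ! j of Node a b \<Rightarrow> [a, b] | Leaf \<Rightarrow> [Leaf])
                        else if 0 < j \<and> MSplit (j - 1) \<in> MSplit ` J then []
                        else [replicate N Leaf ! j]) [0..<length (replicate N Leaf)])
       = concat (map (\<lambda>j. if 0 < j \<and> j - 1 \<in> J then [] else [Leaf]) [0..<N])"
    by (intro arg_cong[where f = concat] map_cong) auto
  also have "\<dots> = replicate (length (filter (\<lambda>j. \<not> (0 < j \<and> j - 1 \<in> J)) [0..<N])) Leaf"
    by (rule concat_if)
  also have "length (filter (\<lambda>j. \<not> (0 < j \<and> j - 1 \<in> J)) [0..<N]) = card ({..<N} - Suc ` J)"
  proof -
    have "length (filter (\<lambda>j. \<not> (0 < j \<and> j - 1 \<in> J)) [0..<N]) = card {i. i < N \<and> \<not> (0 < i \<and> i - 1 \<in> J)}"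
      unfolding length_filter_conv_card by (intro arg_cong[where f = card] Collect_cong) auto
    also have "{i. i < N \<and> \<not> (0 < i \<and> i - 1 \<in> J)} = {..<N} - Suc ` J"
      by (auto simp: image_iff) (metis Suc_pred)
    finally show ?thesis .
  qed
  also have "card ({..<N} - Suc ` J) = N - card J"
  proof -
    have "Suc ` J \<subseteq> {..<N}" using J by auto
    then have "card ({..<N} - Suc ` J) = N - card (Suc ` J)" by (simp add: card_Diff_subset fin)
    also have "card (Suc ` J) = card J" by (simp add: card_image)
    finally show ?thesis .
  qed
  finally show ?thesis unfolding del_def using S by simp
qed

definition tp :: "nat \<Rightarrow> nat \<Rightarrow> picture" where "tp m n = tree_pic (Tmn m n)"

lemma tp_eq: "tp m n = (Tmn m n, replicate (m + n + 2) Leaf)"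
  unfolding tp_def tree_pic_def by simp

lemma del_sq:
  fixes m n :: nat
  assumes "J \<subseteq> {0, m + n + 2}"
  shows "del (tp (Suc m) (Suc n)) (MSplit ` J) = tp (if 0 \<in> J then m else Suc m) (if m + n + 2 \<in> J then n else Suc n)"
proof -
  have fin: "finite J" using assms finite_subset by blast
  have "\<forall>j\<in>J. Suc j < Suc m + Suc n + 2" using assms by auto
  then have "del (tp (Suc m) (Suc n)) (MSplit ` J) = (prune J 0 (Tmn (Suc m) (Suc n)), replicate (Suc m + Suc n + 2 - card J) Leaf)"
    unfolding tp_eq by (rule del_rep[OF fin])
  moreover have "Suc m + Suc n + 2 - card J = (if 0 \<in> J then m else Suc m) + (if m + n + 2 \<in> J then n else Suc n) + 2"
  proof -
    have "J = {} \<or> J = {0} \<or> J = {m + n + 2} \<or> J = {0, m + n + 2}" using assms by blast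
    then show ?thesis by auto
  qed
  ultimately show ?thesis by (simp add: prune_Tmn tp_eq)
qed

definition hat :: "real \<Rightarrow> real" where "hat x = max 0 (1 - \<bar>x\<bar>)"

lemma hat_eq:
  fixes m m' :: nat and t :: real
  assumes "0 \<le> t" "t \<le> 1"
  shows "hat (real m + t - real m') = (if m' = m then 1 - t else if m' = Suc m then t else 0)"
proof -
  consider "m' = m" | "m' = Suc m" | "m' < m" | "m' > Suc m" by linarith
  then show ?thesis
  proof cases
    case 3 then have "real m' + 1 \<le> real m" by linarith
    then show ?thesis using assms 3 unfolding hat_def by auto
  next
    case 4 then have "real m + 2 \<le> real m'" by linarith
    then show ?thesis using assms 4 unfolding hat_def by auto
  qed (use assms in \<open>auto simp: hat_def\<close>)
qed

definition Qp :: "real \<Rightarrow> real \<Rightarrow> picture \<Rightarrow> real" where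
  "Qp a b v = (if \<exists>m n. v = tp m n then hat (a - real (lsp (fst v) - 1)) * hat (b - real (rsp (fst v) - 1)) else 0)"

definition Ip :: "real \<Rightarrow> picture \<Rightarrow> real" where
  "Ip s v = (if v = tp 0 0 then 1 - s else if v = tree_pic Leaf then s else 0)"

lemma Qp_tp: "Qp a b (tp m n) = hat (a - real m) * hat (b - real n)"
  unfolding Qp_def by (auto simp: tp_eq)

lemma Qp_other: "\<not> (\<exists>m n. v = tp m n) \<Longrightarrow> Qp a b v = 0"
  unfolding Qp_def by simp

lemma tp_inj[simp]: "tp m n = tp m' n' \<longleftrightarrow> m = m' \<and> n = n'"
  unfolding tp_def by (rule tree_pic_inj)

lemma pow2_sum:
  assumes "a \<noteq> b"
  shows "(\<Sum>S\<in>Pow {a, b}. f S) = f {} + f {a} + f {b} + f {a, b}"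
proof -
  have "Pow {a, b} = {{}, {a}, {b}, {a, b}}" by (auto simp: Pow_insert)
  then show ?thesis using assms by (simp add: insert_commute add.assoc)
qed

definition sq :: "nat \<Rightarrow> nat \<Rightarrow> cube" where
  "sq m n = (tp (Suc m) (Suc n), {MSplit 0, MSplit (m + n + 2)})"

lemma cw_sq:
  assumes t0: "0 \<le> t (MSplit 0)" "t (MSplit 0) \<le> 1" and t1: "0 \<le> t (MSplit (m + n + 2))" "t (MSplit (m + n + 2)) \<le> 1"
  shows "cweight (sq m n) t = Qp (real m + t (MSplit 0)) (real n + t (MSplit (m + n + 2)))"
proof
  fix v
  define a where "a = MSplit 0"
  define b where "b = MSplit (m + n + 2)"
  have ab: "a \<noteq> b" unfolding a_def b_def by simp
  have d0: "del (tp (Suc m) (Suc n)) {a, b} = tp m n"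
    using del_sq[of "{0, m+n+2}" m n] unfolding a_def b_def by simp
  have d1: "del (tp (Suc m) (Suc n)) {b} = tp (Suc m) n"
    using del_sq[of "{m+n+2}" m n] unfolding a_def b_def by simp
  have d2: "del (tp (Suc m) (Suc n)) {a} = tp m (Suc n)"
    using del_sq[of "{0}" m n] unfolding a_def b_def by simp
  have d3: "del (tp (Suc m) (Suc n)) {} = tp (Suc m) (Suc n)"
    using del_sq[of "{}" m n] by simp
  have "cweight (sq m n) t v = (if v = tp m n then (1 - t a) * (1 - t b) else 0)
     + (if v = tp (Suc m) n then t a * (1 - t b) else 0)
     + (if v = tp m (Suc n) then (1 - t a) * t b else 0)
     + (if v = tp (Suc m) (Suc n) then t a * t b else 0)"
    unfolding sq_def cweight_alt a_def[symmetric] b_def[symmetric]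
    using ab d0 d1 d2 d3 by (simp add: pow2_sum wt_def insert_Diff_if)
  also have "\<dots> = Qp (real m + t a) (real n + t b) v"
  proof (cases "\<exists>m' n'. v = tp m' n'")
    case True
    then obtain m' n' where v: "v = tp m' n'" by blast
    show ?thesis unfolding v Qp_tp
      using hat_eq[of "t a" m m'] hat_eq[of "t b" n n'] t0 t1 unfolding a_def b_def
      by (auto simp: algebra_simps)
  next
    case False
    then show ?thesis using Qp_other[OF False] by auto
  qed
  finally show "cweight (sq m n) t v = Qp (real m + t (MSplit 0)) (real n + t (MSplit (m + n + 2))) v"
    unfolding a_def b_def .
qed

definition edge :: cube where "edge = (tp 0 0, {MSplit 0})"

lemma cw_edge: "cweight edge t = Ip (1 - t (MSplit 0))"
proof
  fix v
  have d1: "del (tp 0 0) {MSplit 0} = tree_pic Leaf"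
    unfolding del_def tp_eq tree_pic_def Tmn_def by (simp add: mid_def upt_rec)
  have d0: "del (tp 0 0) {} = tp 0 0"
    unfolding del_def tp_eq tree_pic_def Tmn_def by (simp add: mid_def upt_rec)
  have P: "Pow {MSplit 0} = {{}, {MSplit 0}}" by (auto simp: Pow_insert)
  have ne: "tp 0 0 \<noteq> tree_pic Leaf" unfolding tp_def tree_pic_def Tmn_def by simp
  show "cweight edge t v = Ip (1 - t (MSplit 0)) v"
    unfolding edge_def cweight_alt P using d0 d1 ne by (auto simp: wt_def Ip_def)
qed

lemma Qp00: "Qp 0 0 = Ip 0"
proof
  fix v
  show "Qp 0 0 v = Ip 0 v"
  proof (cases "\<exists>m n. v = tp m n")
    case True
    then obtain m n where v: "v = tp m n" by blast
    have ne: "tp m n \<noteq> tree_pic Leaf" unfolding tp_def tree_pic_def by simp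
    show ?thesis unfolding v Qp_tp Ip_def using ne by (auto simp: hat_def)
  next
    case False
    then show ?thesis unfolding Ip_def using Qp_other[OF False] by auto
  qed
qed


lemma mcarets_Tmn: "mcarets 0 (Tmn (Suc m) (Suc n)) = {0, m + n + 2}"
proof -
  have ne: "combl (Suc m) \<noteq> Leaf" by simp
  have "mcarets 0 (Node (combl (Suc m)) (combr (Suc n))) = mcarets 0 (combl (Suc m)) \<union> mcarets (leaves (combl (Suc m))) (combr (Suc n))"
    using ne by (subst mcarets.simps) simp
  then show ?thesis unfolding Tmn_def by (simp only: mcarets_combl mcarets_combr leaves_combl) auto
qed

lemma rep_vert: "(T, replicate (leaves T) Leaf) \<in> vertices"
  unfolding vertices_def reduced_def by (auto simp: sum_list_replicate)

lemma tp_vert: "tp m n \<in> vertices"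
  using rep_vert[of "Tmn m n"] unfolding tp_def tree_pic_def .

lemma maxtr_rep: "MSplit j \<in> maxtr (T, replicate N Leaf) \<longleftrightarrow> Suc j < N \<and> j \<in> mcarets 0 T"
  unfolding maxtr_def by (auto simp: mid_rep)

lemma maxtr_tp: "MSplit j \<in> maxtr (tp m n) \<longleftrightarrow> Suc j < m + n + 2 \<and> j \<in> mcarets 0 (Tmn m n)"
  unfolding tp_def tree_pic_def using maxtr_rep[of j "Tmn m n" "leaves (Tmn m n)"] by simp

lemma K_sub: "K_cubes \<subseteq> XF_cubes"
proof
  fix C assume "C \<in> K_cubes"
  then consider "C = edge" | m n where "C = sq m n"
    unfolding K_cubes_def edge_def sq_def tp_def by blast
  then show "C \<in> XF_cubes"
  proof cases
    case 1
    have "MSplit 0 \<in> maxtr (tp 0 0)" unfolding maxtr_tp by (simp add: Tmn_def)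
    then show ?thesis unfolding 1 edge_def XF_cubes_def using tp_vert by auto
  next
    case 2
    have "MSplit 0 \<in> maxtr (tp (Suc m) (Suc n))" unfolding maxtr_tp using mcarets_Tmn[of m n] by simp
    moreover have "MSplit (m + n + 2) \<in> maxtr (tp (Suc m) (Suc n))"
      unfolding maxtr_tp using mcarets_Tmn[of m n] by simp
    ultimately show ?thesis unfolding 2 sq_def XF_cubes_def using tp_vert by auto
  qed
qed

lemma sq_in: "sq m n \<in> K_cubes" unfolding K_cubes_def sq_def tp_def by auto
lemma edge_in: "edge \<in> K_cubes" unfolding K_cubes_def edge_def tp_def by auto

lemma Tmn_NLL: "Tmn (Suc m) (Suc n) \<noteq> Node Leaf Leaf" unfolding Tmn_def by simp

lemma FF_Qp_sq:
  fixes m n :: nat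
  assumes t0: "0 \<le> t (MSplit 0)" "t (MSplit 0) \<le> 1" and t1: "0 \<le> t (MSplit (m + n + 2))" "t (MSplit (m + n + 2)) \<le> 1"
  shows "FF al be ga (cweight (sq m n) t) = al * (real m + t (MSplit 0)) + be * (real n + t (MSplit (m + n + 2)))"
proof -
  have C: "(tp (Suc m) (Suc n), {MSplit 0, MSplit (m + n + 2)}) \<in> XF_cubes" using K_sub sq_in unfolding sq_def by blast
  have g: "gT al be ga (fst (tp (Suc m) (Suc n))) = al * (real m + 1) + be * (real n + 1)"
    unfolding gT_def tp_eq by (simp add: algebra_simps)
  have d0: "dl al be ga (tp (Suc m) (Suc n)) (MSplit 0) = al"
    unfolding dl_def tp_eq using Tmn_NLL[of m n] by simp
  have d1: "dl al be ga (tp (Suc m) (Suc n)) (MSplit (m + n + 2)) = be"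
    unfolding dl_def tp_eq using Tmn_NLL[of m n] by simp
  show ?thesis unfolding sq_def FF_cube[OF C] g using d0 d1 by (simp add: algebra_simps)
qed

lemma FF_edge:
  shows "FF al be ga (cweight edge t) = - ga * (1 - t (MSplit 0))"
proof -
  have C: "(tp 0 0, {MSplit 0}) \<in> XF_cubes" using K_sub edge_in unfolding edge_def by blast
  have g: "gT al be ga (fst (tp 0 0)) = 0" unfolding gT_def tp_eq by simp
  have d: "dl al be ga (tp 0 0) (MSplit 0) = ga" unfolding dl_def tp_eq Tmn_def by simp
  show ?thesis unfolding edge_def FF_cube[OF C] g using d by simp
qed

lemma Qp_sq:
  assumes "0 \<le> a" "0 \<le> b"
  shows "\<exists>m n t. Qp a b = cweight (sq m n) t \<and> t \<in> box (snd (sq m n)) \<and> real m + t (MSplit 0) = a \<and> real n + t (MSplit (m + n + 2)) = b"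
proof -
  define m where "m = nat \<lfloor>a\<rfloor>"
  define n where "n = nat \<lfloor>b\<rfloor>"
  have rm: "real m \<le> a" "a < real m + 1" unfolding m_def using assms by linarith+
  have rn: "real n \<le> b" "b < real n + 1" unfolding n_def using assms by linarith+
  define t where "t = (\<lambda>w. if w = MSplit 0 then a - real m else b - real n)"
  have t0: "t (MSplit 0) = a - real m" "t (MSplit (m + n + 2)) = b - real n" unfolding t_def by auto
  have "Qp a b = cweight (sq m n) t" using cw_sq[of t m n] t0 rm rn by simp
  moreover have "t \<in> box (snd (sq m n))" unfolding box_def sq_def using t0 rm rn by auto
  ultimately show ?thesis using t0 by force
qed

lemma FF_Qp: "0 \<le> a \<Longrightarrow> 0 \<le> b \<Longrightarrow> FF al be ga (Qp a b) = al * a + be * b"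
  using Qp_sq[of a b] FF_Qp_sq unfolding box_def sq_def by fastforce

lemma FF_Ip: "FF al be ga (Ip s) = - ga * s"
  using FF_edge[of al be ga "\<lambda>_. 1 - s"] cw_edge[of "\<lambda>_. 1 - s"] by simp

lemma Ip_edge: "0 \<le> s \<Longrightarrow> s \<le> 1 \<Longrightarrow> Ip s = cweight edge (\<lambda>_. 1 - s) \<and> (\<lambda>_. 1 - s) \<in> box (snd edge)"
  using cw_edge[of "\<lambda>_. 1 - s"] unfolding box_def edge_def by simp

lemma pts_K:
  assumes "x \<in> pts K_cubes"
  shows "(\<exists>a b. 0 \<le> a \<and> 0 \<le> b \<and> x = Qp a b) \<or> (\<exists>s. 0 \<le> s \<and> s \<le> 1 \<and> x = Ip s)"
proof -
  obtain C t where x: "x = cweight C t" "C \<in> K_cubes" "t \<in> box (snd C)" using assms unfolding pts_def by blast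
  from x(2) consider "C = edge" | m n where "C = sq m n"
    unfolding K_cubes_def edge_def sq_def tp_def by blast
  then show ?thesis
  proof cases
    case 1
    then show ?thesis using x cw_edge[of t] unfolding box_def edge_def
      by (intro disjI2 exI[of _ "1 - t (MSplit 0)"]) auto
  next
    case 2
    then have "x = Qp (real m + t (MSplit 0)) (real n + t (MSplit (m + n + 2)))"
      using x cw_sq[of t m n] unfolding box_def sq_def by simp
    moreover have "0 \<le> real m + t (MSplit 0)" "0 \<le> real n + t (MSplit (m + n + 2))"
      using x(3) 2 unfolding box_def sq_def by auto
    ultimately show ?thesis by blast
  qed
qed


lemma ispath_single:
  assumes "C \<in> Cs" "t \<in> box (snd C)" "s \<in> box (snd C)" "L = eucl (snd C) t s"
  shows "ispath Cs (cweight C t) (cweight C s) L"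
  unfolding ispath_def
  by (rule exI[of _ 1], rule exI[of _ "\<lambda>_. C"], rule exI[of _ "\<lambda>_. t"], rule exI[of _ "\<lambda>_. s"],
      rule exI[of _ "\<lambda>i. if i = 0 then cweight C t else cweight C s"]) (use assms in auto)

lemma sum_split_nat: "(\<Sum>i<k1 + k2. f i) = (\<Sum>i<k1. f i) + (\<Sum>i<k2. f (k1 + i))"
  for f :: "nat \<Rightarrow> real"
  by (induction k2) (auto simp: add.assoc)

lemma ispath_trans:
  assumes "ispath Cs x y L1" "ispath Cs y z L2"
  shows "ispath Cs x z (L1 + L2)"
proof -
  obtain k1 C1 t1 s1 p1 where A: "p1 0 = x" "p1 k1 = y"
    "\<forall>i<k1. C1 i \<in> Cs \<and> t1 i \<in> box (snd (C1 i)) \<and> s1 i \<in> box (snd (C1 i)) \<and>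
              p1 i = cweight (C1 i) (t1 i) \<and> p1 (Suc i) = cweight (C1 i) (s1 i)"
    "L1 = (\<Sum>i<k1. eucl (snd (C1 i)) (t1 i) (s1 i))"
    using assms(1) unfolding ispath_def by blast
  obtain k2 C2 t2 s2 p2 where B: "p2 0 = y" "p2 k2 = z"
    "\<forall>i<k2. C2 i \<in> Cs \<and> t2 i \<in> box (snd (C2 i)) \<and> s2 i \<in> box (snd (C2 i)) \<and>
              p2 i = cweight (C2 i) (t2 i) \<and> p2 (Suc i) = cweight (C2 i) (s2 i)"
    "L2 = (\<Sum>i<k2. eucl (snd (C2 i)) (t2 i) (s2 i))"
    using assms(2) unfolding ispath_def by blast
  define C where "C i = (if i < k1 then C1 i else C2 (i - k1))" for i
  define t where "t i = (if i < k1 then t1 i else t2 (i - k1))" for i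
  define s where "s i = (if i < k1 then s1 i else s2 (i - k1))" for i
  define p where "p i = (if i \<le> k1 then p1 i else p2 (i - k1))" for i
  have "p 0 = x" unfolding p_def using A by simp
  moreover have "p (k1 + k2) = z" unfolding p_def using A B by auto
  moreover have "\<forall>i<k1 + k2. C i \<in> Cs \<and> t i \<in> box (snd (C i)) \<and> s i \<in> box (snd (C i)) \<and>
              p i = cweight (C i) (t i) \<and> p (Suc i) = cweight (C i) (s i)"
  proof (intro allI impI)
    fix i assume i: "i < k1 + k2"
    show "C i \<in> Cs \<and> t i \<in> box (snd (C i)) \<and> s i \<in> box (snd (C i)) \<and>
              p i = cweight (C i) (t i) \<and> p (Suc i) = cweight (C i) (s i)"
    proof (cases "i < k1")
      case True
      then show ?thesis using A(3) unfolding C_def t_def s_def p_def by auto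
    next
      case False
      then have j: "i - k1 < k2" and e: "Suc i - k1 = Suc (i - k1)" using i by auto
      have pi: "p i = p2 (i - k1)" unfolding p_def using False A(2) B(1) by auto
      show ?thesis using B(3) j False e pi unfolding C_def t_def s_def p_def by auto
    qed
  qed
  moreover have "L1 + L2 = (\<Sum>i<k1 + k2. eucl (snd (C i)) (t i) (s i))"
    unfolding sum_split_nat A(4) B(4) unfolding C_def t_def s_def by simp
  ultimately show ?thesis unfolding ispath_def by blast
qed

lemma Q_step:
  fixes m n :: nat
  assumes "real m \<le> a" "a \<le> real m + 1" "real m \<le> a'" "a' \<le> real m + 1"
    "real n \<le> b" "b \<le> real n + 1" "real n \<le> b'" "b' \<le> real n + 1"
  shows "ispath K_cubes (Qp a b) (Qp a' b') (sqrt ((a - a')^2 + (b - b')^2))"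
proof -
  define t where "t = (\<lambda>w. if w = MSplit 0 then a - real m else b - real n)"
  define s where "s = (\<lambda>w. if w = MSplit 0 then a' - real m else b' - real n)"
  have t0: "t (MSplit 0) = a - real m" "t (MSplit (m + n + 2)) = b - real n" unfolding t_def by auto
  have s0: "s (MSplit 0) = a' - real m" "s (MSplit (m + n + 2)) = b' - real n" unfolding s_def by auto
  have "Qp a b = cweight (sq m n) t" using cw_sq[of t m n] t0 assms by simp
  moreover have "Qp a' b' = cweight (sq m n) s" using cw_sq[of s m n] s0 assms by simp
  moreover have "t \<in> box (snd (sq m n))" "s \<in> box (snd (sq m n))"
    unfolding box_def sq_def using t0 s0 assms by auto
  moreover have "eucl (snd (sq m n)) t s = sqrt ((a - a')^2 + (b - b')^2)"
    unfolding eucl_def sq_def using t0 s0 by simp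
  ultimately show ?thesis using ispath_single[OF sq_in] by metis
qed

lemma I_step: "0 \<le> s \<Longrightarrow> s \<le> 1 \<Longrightarrow> 0 \<le> s' \<Longrightarrow> s' \<le> 1 \<Longrightarrow> ispath K_cubes (Ip s) (Ip s') \<bar>s - s'\<bar>"
  using ispath_single[OF edge_in, of "\<lambda>_. 1 - s" "\<lambda>_. 1 - s'"] Ip_edge[of s] Ip_edge[of s']
  unfolding eucl_def edge_def by (simp add: abs_minus_commute)

definition Ib :: "real \<Rightarrow> real \<Rightarrow> int set" where
  "Ib x y = {i. min x y < of_int i \<and> of_int i < max x y}"

lemma Ib_fin: "finite (Ib x y)"
proof -
  have "Ib x y \<subseteq> {\<lfloor>min x y\<rfloor>..\<lceil>max x y\<rceil>}" unfolding Ib_def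
    by (auto, linarith+)
  then show ?thesis by (rule finite_subset) simp
qed

lemma Ib_conv:
  assumes "0 \<le> l" "l \<le> 1" "z = x + l * (y - x)"
  shows "Ib x z \<subseteq> Ib x y" "Ib z y \<subseteq> Ib x y"
proof -
  have "min x y \<le> z \<and> z \<le> max x y"
  proof (cases "x \<le> y")
    case True
    have "0 \<le> l * (y - x)" "l * (y - x) \<le> y - x" using assms True by (auto simp: mult_left_le_one_le mult_nonneg_nonneg)
    then show ?thesis using True assms by auto
  next
    case False
    have "0 \<le> l * (x - y)" "l * (x - y) \<le> x - y" using assms False by (auto simp: mult_left_le_one_le mult_nonneg_nonneg)
    then show ?thesis using False assms by (auto simp: algebra_simps)
  qed
  then show "Ib x z \<subseteq> Ib x y" "Ib z y \<subseteq> Ib x y" unfolding Ib_def by auto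
qed

lemma Ib_pick:
  assumes "c \<in> Ib x y"
  shows "\<exists>l. 0 \<le> l \<and> l \<le> 1 \<and> x + l * (y - x) = of_int c"
proof -
  have ne: "x \<noteq> y" using assms unfolding Ib_def by auto
  define l where "l = (of_int c - x) / (y - x)"
  have e: "x + l * (y - x) = of_int c" unfolding l_def using ne by simp
  have "0 \<le> l \<and> l \<le> 1"
  proof (cases "x < y")
    case True
    then show ?thesis using assms unfolding l_def Ib_def by (auto simp: divide_simps)
  next
    case False
    then have "y < x" using ne by simp
    then show ?thesis using assms unfolding l_def Ib_def by (auto simp: divide_simps)
  qed
  then show ?thesis using e by blast
qed

lemma Ib_strict:
  assumes "c \<in> Ib x y" "0 \<le> l" "l \<le> 1" "x + l * (y - x) = of_int c"
  shows "card (Ib x (of_int c)) < card (Ib x y)" "card (Ib (of_int c) y) < card (Ib x y)"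
proof -
  have "c \<notin> Ib x (of_int c)" "c \<notin> Ib (of_int c) y" unfolding Ib_def by auto
  then have "Ib x (of_int c) \<subset> Ib x y" "Ib (of_int c) y \<subset> Ib x y"
    using Ib_conv[OF assms(2,3) assms(4)[symmetric]] assms(1) by auto
  then show "card (Ib x (of_int c)) < card (Ib x y)" "card (Ib (of_int c) y) < card (Ib x y)"
    using Ib_fin psubset_card_mono by blast+
qed

lemma Ib_sq:
  assumes "0 \<le> x" "0 \<le> y" "Ib x y = {}"
  shows "\<exists>m::nat. real m \<le> x \<and> x \<le> real m + 1 \<and> real m \<le> y \<and> y \<le> real m + 1"
proof -
  define m where "m = nat \<lfloor>min x y\<rfloor>"
  have rm: "real m = of_int \<lfloor>min x y\<rfloor>" unfolding m_def using assms by simp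
  have lo: "real m \<le> min x y" "min x y < real m + 1" using rm by linarith+
  have "max x y \<le> real m + 1"
  proof (rule ccontr)
    assume "\<not> max x y \<le> real m + 1"
    then have h: "real m + 1 < max x y" by linarith
    have "of_int (int m + 1) = real m + 1" by simp
    then have "int m + 1 \<in> Ib x y" unfolding Ib_def using lo h by (simp only: mem_Collect_eq)
    then show False using assms by simp
  qed
  then show ?thesis using lo by (intro exI[of _ m]) auto
qed

lemma seg:
  assumes "0 \<le> l" "l \<le> 1"
  shows "sqrt ((a - (a + l * (a' - a)))^2 + (b - (b + l * (b' - b)))^2)
       + sqrt (((a + l * (a' - a)) - a')^2 + ((b + l * (b' - b)) - b')^2)
       = sqrt ((a - a')^2 + (b - b')^2)"
proof -
  define Q where "Q = (a - a')^2 + (b - b')^2"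
  have 1: "(a - (a + l * (a' - a)))^2 + (b - (b + l * (b' - b)))^2 = l^2 * Q"
    unfolding Q_def by (simp add: power2_eq_square algebra_simps)
  have 2: "((a + l * (a' - a)) - a')^2 + ((b + l * (b' - b)) - b')^2 = (1 - l)^2 * Q"
    unfolding Q_def by (simp add: power2_eq_square algebra_simps)
  show ?thesis unfolding 1 2 Q_def[symmetric] using assms
    by (simp add: real_sqrt_mult algebra_simps)
qed

lemma Q_path:
  "0 \<le> a \<Longrightarrow> 0 \<le> b \<Longrightarrow> 0 \<le> a' \<Longrightarrow> 0 \<le> b' \<Longrightarrow>
   ispath K_cubes (Qp a b) (Qp a' b') (sqrt ((a - a')^2 + (b - b')^2))"
proof (induction "card (Ib a a') + card (Ib b b')" arbitrary: a b a' b' rule: less_induct)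
  case less
  show ?case
  proof (cases "Ib a a' = {} \<and> Ib b b' = {}")
    case True
    obtain m :: nat where "real m \<le> a" "a \<le> real m + 1" "real m \<le> a'" "a' \<le> real m + 1"
      using Ib_sq[of a a'] True less by blast
    moreover obtain n :: nat where "real n \<le> b" "b \<le> real n + 1" "real n \<le> b'" "b' \<le> real n + 1"
      using Ib_sq[of b b'] True less by blast
    ultimately show ?thesis by (rule Q_step)
  next
    case False
    have "\<exists>l. 0 \<le> l \<and> l \<le> 1 \<and>
      card (Ib a (a + l * (a' - a))) + card (Ib b (b + l * (b' - b))) < card (Ib a a') + card (Ib b b') \<and>
      card (Ib (a + l * (a' - a)) a') + card (Ib (b + l * (b' - b)) b') < card (Ib a a') + card (Ib b b')"
    proof (cases "Ib a a' = {}")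
      case True
      then obtain c where c: "c \<in> Ib b b'" using False by blast
      obtain l where l: "0 \<le> l" "l \<le> 1" "b + l * (b' - b) = of_int c" using Ib_pick[OF c] by blast
      have "card (Ib a (a + l * (a' - a))) \<le> card (Ib a a')" "card (Ib (a + l * (a' - a)) a') \<le> card (Ib a a')"
        using Ib_conv[OF l(1,2) refl, of a a'] Ib_fin card_mono by blast+
      then show ?thesis using Ib_strict[OF c l] l by (intro exI[of _ l]) auto
    next
      case False
      then obtain c where c: "c \<in> Ib a a'" by blast
      obtain l where l: "0 \<le> l" "l \<le> 1" "a + l * (a' - a) = of_int c" using Ib_pick[OF c] by blast
      have "card (Ib b (b + l * (b' - b))) \<le> card (Ib b b')" "card (Ib (b + l * (b' - b)) b') \<le> card (Ib b b')"
        using Ib_conv[OF l(1,2) refl, of b b'] Ib_fin card_mono by blast+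
      then show ?thesis using Ib_strict[OF c l] l by (intro exI[of _ l]) auto
    qed
    then obtain l where l: "0 \<le> l" "l \<le> 1"
      and c1: "card (Ib a (a + l * (a' - a))) + card (Ib b (b + l * (b' - b))) < card (Ib a a') + card (Ib b b')"
      and c2: "card (Ib (a + l * (a' - a)) a') + card (Ib (b + l * (b' - b)) b') < card (Ib a a') + card (Ib b b')"
      by blast
    define aR where "aR = a + l * (a' - a)"
    define bR where "bR = b + l * (b' - b)"
    have nn: "0 \<le> aR" "0 \<le> bR"
    proof -
      have "aR = (1 - l) * a + l * a'" "bR = (1 - l) * b + l * b'" unfolding aR_def bR_def by (simp_all add: algebra_simps)
      then show "0 \<le> aR" "0 \<le> bR" using l less.prems by simp_all
    qed
    have p1: "ispath K_cubes (Qp a b) (Qp aR bR) (sqrt ((a - aR)^2 + (b - bR)^2))"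
      using less.hyps[OF c1[folded aR_def bR_def]] less.prems nn by blast
    have p2: "ispath K_cubes (Qp aR bR) (Qp a' b') (sqrt ((aR - a')^2 + (bR - b')^2))"
      using less.hyps[OF c2[folded aR_def bR_def]] less.prems nn by blast
    show ?thesis using ispath_trans[OF p1 p2] seg[OF l, of a a' b b'] unfolding aR_def bR_def by simp
  qed
qed


lemma unitdir: "\<exists>al be. al^2 + be^2 \<le> (1::real) \<and> al * dx + be * dy = sqrt (dx^2 + dy^2)"
proof (cases "sqrt (dx^2 + dy^2) = 0")
  case True
  then show ?thesis by (intro exI[of _ 0]) simp
next
  case False
  define D where "D = sqrt (dx^2 + dy^2)"
  have D2: "D^2 = dx^2 + dy^2" unfolding D_def by (simp add: sum_power2_ge_zero)
  have Dp: "D \<noteq> 0" using False D_def by simp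
  have "(dx / D)^2 + (dy / D)^2 = (dx^2 + dy^2) / D^2" by (simp add: power_divide add_divide_distrib)
  also have "\<dots> = 1" unfolding D2[symmetric] using Dp by simp
  finally have "(dx / D)^2 + (dy / D)^2 = 1" .
  moreover have "dx / D * dx + dy / D * dy = D"
  proof -
    have "dx / D * dx + dy / D * dy = (dx^2 + dy^2) / D" by (simp add: power2_eq_square add_divide_distrib)
    also have "\<dots> = D^2 / D" using D2 by simp
    also have "\<dots> = D" using Dp by (simp add: power2_eq_square)
    finally show ?thesis .
  qed
  ultimately have "(dx / D)^2 + (dy / D)^2 \<le> 1 \<and> dx / D * dx + dy / D * dy = sqrt (dx^2 + dy^2)" unfolding D_def by simp
  then show ?thesis by blast
qed

lemma ispath_mono: "ispath K_cubes x y L \<Longrightarrow> ispath XF_cubes x y L"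
  unfolding ispath_def using K_sub by blast

lemma key:
  assumes "x \<in> pts K_cubes" "y \<in> pts K_cubes"
  shows "\<exists>L al be ga. ispath K_cubes x y L \<and> al^2 + be^2 \<le> 1 \<and> ga^2 \<le> (1::real) \<and> L \<le> FF al be ga y - FF al be ga x"
proof -
  from pts_K[OF assms(1)] pts_K[OF assms(2)] show ?thesis
  proof (elim disjE exE conjE)
    fix a b a' b' assume h: "0 \<le> a" "0 \<le> b" "x = Qp a b" "0 \<le> a'" "0 \<le> b'" "y = Qp a' b'"
    obtain al be where u: "al^2 + be^2 \<le> (1::real)" "al * (a' - a) + be * (b' - b) = sqrt ((a' - a)^2 + (b' - b)^2)"
      using unitdir by blast
    have p: "ispath K_cubes x y (sqrt ((a - a')^2 + (b - b')^2))" using Q_path h by simp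
    have "sqrt ((a - a')^2 + (b - b')^2) = FF al be 0 y - FF al be 0 x"
      using u(2) h FF_Qp by (simp add: power2_commute algebra_simps)
    then show ?thesis using p u(1) by (intro exI[of _ "sqrt ((a - a')^2 + (b - b')^2)"] exI[of _ al] exI[of _ be] exI[of _ 0]) simp
  next
    fix s a b assume h: "0 \<le> s" "s \<le> 1" "x = Ip s" "0 \<le> a" "0 \<le> b" "y = Qp a b"
    obtain al be where u: "al^2 + be^2 \<le> (1::real)" "al * a + be * b = sqrt (a^2 + b^2)"
      using unitdir by blast
    have "ispath K_cubes (Ip s) (Ip 0) s" using I_step[of s 0] h by simp
    moreover have "ispath K_cubes (Qp 0 0) (Qp a b) (sqrt (a^2 + b^2))" using Q_path[of 0 0 a b] h by simp
    ultimately have p: "ispath K_cubes x y (s + sqrt (a^2 + b^2))" using ispath_trans Qp00 h by metis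
    have "s + sqrt (a^2 + b^2) = FF al be 1 y - FF al be 1 x"
      using u(2) h FF_Qp FF_Ip by simp
    then show ?thesis using p u(1) by (intro exI[of _ "s + sqrt (a^2 + b^2)"] exI[of _ al] exI[of _ be] exI[of _ 1]) simp
  next
    fix s a b assume h: "0 \<le> s" "s \<le> 1" "y = Ip s" "0 \<le> a" "0 \<le> b" "x = Qp a b"
    obtain al be where u: "al^2 + be^2 \<le> (1::real)" "al * a + be * b = sqrt (a^2 + b^2)"
      using unitdir by blast
    have "ispath K_cubes (Ip 0) (Ip s) s" using I_step[of 0 s] h by simp
    moreover have "ispath K_cubes (Qp a b) (Qp 0 0) (sqrt (a^2 + b^2))" using Q_path[of a b 0 0] h by simp
    ultimately have p: "ispath K_cubes x y (sqrt (a^2 + b^2) + s)" using ispath_trans Qp00 h by metis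
    have "sqrt (a^2 + b^2) + s = FF (- al) (- be) (- 1) y - FF (- al) (- be) (- 1) x"
      using u(2) h FF_Qp FF_Ip by simp
    then show ?thesis using p u(1) by (intro exI[of _ "sqrt (a^2 + b^2) + s"] exI[of _ "- al"] exI[of _ "- be"] exI[of _ "- 1"]) simp
  next
    fix s s' assume h: "0 \<le> s" "s \<le> 1" "x = Ip s" "0 \<le> s'" "s' \<le> 1" "y = Ip s'"
    have p: "ispath K_cubes x y \<bar>s - s'\<bar>" using I_step h by simp
    define g where "g = (if s' \<le> s then 1 else - 1 :: real)"
    have "\<bar>s - s'\<bar> = FF 0 0 g y - FF 0 0 g x" using h FF_Ip unfolding g_def by auto
    moreover have "g^2 \<le> 1" unfolding g_def by simp
    ultimately show ?thesis using p by (intro exI[of _ "\<bar>s - s'\<bar>"] exI[of _ 0] exI[of _ 0] exI[of _ g]) simp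
  qed
qed

theorem lemma6p1:
  shows "K_cubes \<subseteq> XF_cubes \<and>
    (\<forall>x\<in>pts K_cubes. \<forall>y\<in>pts K_cubes. cmetric XF_cubes x y = cmetric K_cubes x y)"
proof (intro conjI ballI)
  show "K_cubes \<subseteq> XF_cubes" by (rule K_sub)
next
  fix x y assume xy: "x \<in> pts K_cubes" "y \<in> pts K_cubes"
  obtain L al be ga where L: "ispath K_cubes x y L" "al^2 + be^2 \<le> 1" "ga^2 \<le> (1::real)"
    "L \<le> FF al be ga y - FF al be ga x"
    using key[OF xy] by blast
  have bK: "bdd_below {L. ispath K_cubes x y L}" using ispath_nonneg by (intro bdd_belowI) auto
  have bX: "bdd_below {L. ispath XF_cubes x y L}" using ispath_nonneg by (intro bdd_belowI) auto
  have "cmetric K_cubes x y \<le> L" unfolding cmetric_alt using L(1) bK by (intro cInf_lower) auto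
  also have "L \<le> cmetric XF_cubes x y" using L(4) cmetric_lower[OF ispath_mono[OF L(1)] L(2,3)] by linarith
  also have "cmetric XF_cubes x y \<le> cmetric K_cubes x y" unfolding cmetric_alt
    using L(1) bX ispath_mono by (intro cInf_superset_mono) auto
  finally have "cmetric K_cubes x y \<le> cmetric XF_cubes x y" using \<open>L \<le> cmetric XF_cubes x y\<close> \<open>cmetric K_cubes x y \<le> L\<close> by linarith
  then show "cmetric XF_cubes x y = cmetric K_cubes x y"
    using \<open>cmetric XF_cubes x y \<le> cmetric K_cubes x y\<close> by linarith
qed

end
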